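(* Let $n\ge1$ and $\gamma=0$ (so $\beta=1$). Consider the problem of finding $\ell,R>0$ and $U:[0,R]\to[0,\infty)$, continuous on $[0,R]$ and $C^2$ on $[0,R)$, such that $$U''+\Big(\frac{n-1}{r}-\frac r2\Big)U'+\frac12U=0\ \text{ in }(0,R),\quad U(0)=\ell,\ U'(0)=0,\quad U(R)=0,\ U'(R)=-\sqrt2.$$ This problem has exactly one solution $(\ell,R,U)$, given by $U(r)=\ell\,\mathbf M(-\tfrac12,\tfrac n2,\tfrac{r^2}{4})$, $R=2\sqrt{s_\star}$ and $\frac1\ell=-\sqrt{\frac{s_\star}{2}}\,\frac{d}{ds}\mathbf M(-\tfrac12,\tfrac n2,s)\big|_{s=s_\star}$, where $s_\star>0$ is the unique positive zero of $s\mapsto\mathbf M(-\tfrac12,\tfrac n2,s)$.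
   Context: $\mathbf M(a,b,s)=\sum_{k\ge0}\frac{(a)_k}{(b)_k}\frac{s^k}{k!}$ is Kummer's confluent hypergeometric function ($(a)_k$ the Pochhammer symbol). $U'(R)$ is the left derivative at $R$. (This is the profile equation for radial self-similar solutions $u(x,t)=|t|^{\beta/2}U(|t|^{-1/2}|x|)$, $t<0$, with $U$ extended by zero for $r\ge R$.) *)

theory Defs
  imports "HOL-Analysis.Analysis"
begin

definition kummerM :: "real \<Rightarrow> real \<Rightarrow> real \<Rightarrow> real" where
  "kummerM a b s = (\<Sum>k. pochhammer a k / pochhammer b k * s ^ k / fact k)"

definition profile_sol :: "nat \<Rightarrow> real \<Rightarrow> real \<Rightarrow> (real \<Rightarrow> real) \<Rightarrow> bool" where
  "profile_sol n l R U \<longleftrightarrow>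
     l > 0 \<and> R > 0 \<and>
     (\<forall>r\<in>{0..R}. U r \<ge> 0) \<and>
     continuous_on {0..R} U \<and>
     (\<exists>U1 U2.
        (\<forall>r\<in>{0..<R}. (U has_real_derivative U1 r) (at r within {0..<R})) \<and>
        (\<forall>r\<in>{0..<R}. (U1 has_real_derivative U2 r) (at r within {0..<R})) \<and>
        continuous_on {0..<R} U2 \<and>
        (\<forall>r\<in>{0<..<R}. U2 r + ((real n - 1) / r - r / 2) * U1 r + U r / 2 = 0) \<and>
        U1 0 = 0) \<and>
     U 0 = l \<and> U R = 0 \<and>
     (U has_real_derivative (- sqrt 2)) (at_left R)"

end

theory Submission
  imports Defs
begin

definition cK :: "nat \<Rightarrow> nat \<Rightarrow> real" where
  "cK n k = pochhammer (-1/2) k / pochhammer (real n / 2) k / fact k"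
definition PS :: "(nat \<Rightarrow> real) \<Rightarrow> real \<Rightarrow> real" where
  "PS c x = (\<Sum>k. c k * x ^ k)"

lemma kM_PS: "kummerM (-1/2) (real n / 2) s = PS (cK n) s"
  unfolding kummerM_def PS_def cK_def by simp

lemma poch_bound:
  assumes "n \<ge> 1"
  shows "\<bar>pochhammer (-1/2::real) k\<bar> \<le> pochhammer (real n/2) k"
proof (induction k)
  case 0 show ?case by simp
next
  case (Suc k)
  have h: "\<bar>-1/2 + real k\<bar> \<le> real n/2 + real k" using assms by auto
  have p: "0 \<le> pochhammer (real n/2) k" using assms by (intro less_imp_le pochhammer_pos) auto
  have "\<bar>pochhammer (-1/2::real) k\<bar> * \<bar>-1/2 + real k\<bar> \<le> pochhammer (real n/2) k * (real n/2 + real k)"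
    by (rule mult_mono[OF Suc h p]) simp
  then show ?case by (simp add: pochhammer_Suc abs_mult)
qed

lemma cK_bound:
  assumes "n \<ge> 1"
  shows "\<bar>cK n k\<bar> \<le> inverse (fact k)"
proof -
  have p: "0 < pochhammer (real n/2) k" using assms by (intro pochhammer_pos) auto
  have "\<bar>cK n k\<bar> = \<bar>pochhammer (-1/2::real) k\<bar> / pochhammer (real n/2) k / fact k"
    using p by (simp add: cK_def abs_divide)
  also have "\<dots> \<le> 1 / fact k"
    using poch_bound[OF assms, of k] p by (intro divide_right_mono) (auto simp: divide_le_eq)
  finally show ?thesis by (simp add: field_simps)
qed

lemma cK_summable:
  assumes "n \<ge> 1"
  shows "summable (\<lambda>k. cK n k * x ^ k)"
proof (rule summable_comparison_test'[OF summable_exp[of "\<bar>x\<bar>"]])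
  fix k :: nat
  show "norm (cK n k * x ^ k) \<le> inverse (fact k) * \<bar>x\<bar> ^ k"
    using cK_bound[OF assms, of k] by (simp add: abs_mult power_abs mult_right_mono)
qed

lemma cK_0: "cK n 0 = 1" by (simp add: cK_def)

lemma cK_1: "n \<ge> 1 \<Longrightarrow> cK n 1 = - 1 / real n" by (simp add: cK_def)

lemma cK_neg:
  assumes "n \<ge> 1" "k \<ge> 1"
  shows "cK n k < 0"
proof -
  obtain j where k: "k = Suc j" using assms by (cases k) auto
  have "pochhammer (-1/2::real) k = (-1/2) * pochhammer (1/2) j"
    by (simp add: k pochhammer_rec)
  moreover have "0 < pochhammer (1/2::real) j" by (intro pochhammer_pos) auto
  moreover have "0 < pochhammer (real n/2) k" using assms by (intro pochhammer_pos) auto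
  ultimately show ?thesis unfolding cK_def
    by (simp add: divide_neg_pos mult_neg_pos)
qed

lemma cK_rec:
  assumes "n \<ge> 1"
  shows "(real k + 1) * (real k + real n / 2) * cK n (Suc k) = (real k - 1/2) * cK n k"
proof -
  have p: "0 < pochhammer (real n/2) k" using assms by (intro pochhammer_pos) auto
  have q: "real k + real n / 2 > 0" using assms by auto
  have f: "0 < (fact k :: real)" by simp
  have e: "cK n (Suc k) = pochhammer (-1/2) k * (-1/2 + real k) / (pochhammer (real n/2) k * (real n/2 + real k)) / (fact k * (real k + 1))"
    unfolding cK_def by (simp add: pochhammer_Suc algebra_simps)
  have g: "\<And>A B F x y::real. B > 0 \<Longrightarrow> F > 0 \<Longrightarrow> y > 0 \<Longrightarrow> x \<ge> 0 \<Longrightarrow>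
     (x + 1) * y * (A * (-1/2 + x) / (B * y) / (F * (x + 1))) = (x - 1/2) * (A / B / F)"
  proof -
    fix A B F x y :: real assume h: "B > 0" "F > 0" "y > 0" "x \<ge> 0"
    then have "x + 1 \<noteq> 0" "y \<noteq> 0" "B \<noteq> 0" "F \<noteq> 0" by auto
    then show "(x + 1) * y * (A * (-1/2 + x) / (B * y) / (F * (x + 1))) = (x - 1/2) * (A / B / F)"
      by (simp add: divide_simps)
  qed
  show ?thesis unfolding e unfolding cK_def using g[OF p f, of "real n/2 + real k" "real k"] q
    by (simp add: add.commute)
qed


definition allsum :: "(nat \<Rightarrow> real) \<Rightarrow> bool" where
  "allsum c \<longleftrightarrow> (\<forall>y. summable (\<lambda>k. c k * y ^ k))"

lemma allsum_diffs: "allsum c \<Longrightarrow> allsum (diffs c)"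
  unfolding allsum_def using termdiff_converges_all by blast

lemma allsum_cK: "n \<ge> 1 \<Longrightarrow> allsum (cK n)"
  unfolding allsum_def using cK_summable by blast

lemma PS_deriv: "allsum c \<Longrightarrow> (PS c has_real_derivative PS (diffs c) x) (at x)"
  unfolding allsum_def PS_def by (rule termdiffs_strong_converges_everywhere) auto

lemma PS_chain:
  assumes "allsum c" "(g has_real_derivative g') (at x within S)"
  shows "((\<lambda>x. PS c (g x)) has_real_derivative PS (diffs c) (g x) * g') (at x within S)"
  using DERIV_chain'[OF assms(2) PS_deriv[OF assms(1)]] .

lemma PS_isCont: "allsum c \<Longrightarrow> isCont (PS c) x"
  using PS_deriv DERIV_isCont by blast

lemma PS_sums: "allsum c \<Longrightarrow> (\<lambda>k. c k * x ^ k) sums PS c x"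
  unfolding allsum_def PS_def using summable_sums by blast

lemma PS_xmult:
  assumes "allsum c"
  shows "(\<lambda>k. real k * c k * x ^ k) sums (x * PS (diffs c) x)"
proof -
  define f where "f k = real k * c k * x ^ k" for k
  have "(\<lambda>k. x * (diffs c k * x ^ k)) sums (x * PS (diffs c) x)"
    using PS_sums[OF allsum_diffs[OF assms]] by (rule sums_mult)
  moreover have "(\<lambda>k. x * (diffs c k * x ^ k)) = (\<lambda>k. f (Suc k))"
    by (auto simp: f_def diffs_def algebra_simps)
  ultimately have "f sums (x * PS (diffs c) x + f 0)" using sums_Suc_iff by metis
  then have "f sums (x * PS (diffs c) x)" by (simp add: f_def)
  then show ?thesis unfolding f_def[abs_def] .
qed

lemma kummer_ode:
  assumes n: "n \<ge> 1"
  shows "s * PS (diffs (diffs (cK n))) s + (real n / 2 - s) * PS (diffs (cK n)) s + PS (cK n) s / 2 = 0"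
proof -
  define c where "c = cK n"
  define d where "d = diffs c"
  have ac: "allsum c" using allsum_cK[OF n] by (simp add: c_def)
  have ad: "allsum d" using allsum_diffs[OF ac] by (simp add: d_def)
  have S1: "(\<lambda>k. real k * d k * s ^ k) sums (s * PS (diffs d) s)" using PS_xmult[OF ad] .
  have S2: "(\<lambda>k. d k * s ^ k) sums PS d s" using PS_sums[OF ad] .
  have S3: "(\<lambda>k. real k * c k * s ^ k) sums (s * PS d s)" using PS_xmult[OF ac] by (simp add: d_def)
  have S4: "(\<lambda>k. c k * s ^ k) sums PS c s" using PS_sums[OF ac] .
  have S: "(\<lambda>k. real k * d k * s ^ k + real n / 2 * (d k * s ^ k) - real k * c k * s ^ k + c k * s ^ k / 2)
     sums (s * PS (diffs d) s + real n / 2 * PS d s - s * PS d s + PS c s / 2)"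
    by (intro sums_add sums_diff sums_mult sums_divide S1 S2 S3 S4)
  have z: "real k * d k * s ^ k + real n / 2 * (d k * s ^ k) - real k * c k * s ^ k + c k * s ^ k / 2 = 0" for k
  proof -
    have "real k * d k + real n / 2 * d k = (real k + 1) * (real k + real n / 2) * cK n (Suc k)"
      by (simp add: d_def c_def diffs_def algebra_simps)
    also have "\<dots> = (real k - 1/2) * c k" using cK_rec[OF n] by (simp add: c_def)
    finally have "real k * d k + real n / 2 * d k = (real k - 1/2) * c k" .
    then have "(real k * d k + real n / 2 * d k - real k * c k + c k / 2) * s ^ k = 0"
      by (simp add: algebra_simps)
    then show ?thesis by (simp add: algebra_simps)
  qed
  have "s * PS (diffs d) s + real n / 2 * PS d s - s * PS d s + PS c s / 2 = 0"
    using sums_unique2[OF S] z by simp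
  then show ?thesis by (simp add: c_def d_def algebra_simps)
qed


lemma PS_zero: "PS c 0 = c 0"
  unfolding PS_def by simp

lemma fd_neg:
  assumes n: "n \<ge> 1" and s: "s \<ge> 0"
  shows "PS (diffs (cK n)) s < 0"
proof -
  have ad: "allsum (diffs (cK n))" by (intro allsum_diffs allsum_cK n)
  have sm: "summable (\<lambda>k. - (diffs (cK n) k * s ^ k))"
    using ad unfolding allsum_def by (intro summable_minus) auto
  have "0 < (\<Sum>k. - (diffs (cK n) k * s ^ k))"
  proof (rule suminf_pos2[OF sm, where i=0])
    fix k :: nat
    have "cK n (Suc k) < 0" using cK_neg[OF n] by simp
    then show "0 \<le> - (diffs (cK n) k * s ^ k)" using s
      by (simp add: diffs_def mult_nonpos_nonneg mult_nonneg_nonpos)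
  next
    show "0 < - (diffs (cK n) 0 * s ^ 0)" using cK_neg[OF n, of 1] by (simp add: diffs_def)
  qed
  then show ?thesis unfolding PS_def using ad unfolding allsum_def
    by (simp add: suminf_minus)
qed

lemma f_decr:
  assumes n: "n \<ge> 1" and "0 \<le> a" "a < b"
  shows "PS (cK n) b < PS (cK n) a"
  apply (rule DERIV_neg_imp_decreasing[OF assms(3)])
  using PS_deriv[OF allsum_cK[OF n]] fd_neg[OF n] assms(2) by fastforce

lemma f_upper:
  assumes n: "n \<ge> 1" and s: "s \<ge> 0"
  shows "PS (cK n) s \<le> 1 - s / real n"
proof -
  define g :: "nat \<Rightarrow> real" where "g k = (if k = 0 then 1 else if k = 1 then cK n 1 * s else 0)" for k
  have sg: "summable g" by (rule summable_finite[of "{0,1}"]) (auto simp: g_def)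
  have "suminf g = sum g {0,1}" by (rule suminf_finite) (auto simp: g_def)
  also have "\<dots> = 1 - s / real n" using n cK_1[OF n] by (simp add: g_def)
  finally have eg: "suminf g = 1 - s / real n" .
  have "PS (cK n) s \<le> suminf g" unfolding PS_def
  proof (rule suminf_le)
    fix k :: nat
    show "cK n k * s ^ k \<le> g k"
    proof (cases "k \<ge> 2")
      case True
      then have "cK n k < 0" using cK_neg[OF n, of k] by simp
      then show ?thesis using True s by (simp add: g_def mult_nonpos_nonneg)
    next
      case False
      then have "k = 0 \<or> k = 1" by auto
      then show ?thesis by (auto simp: g_def cK_0)
    qed
  qed (use allsum_cK[OF n] sg in \<open>auto simp: allsum_def\<close>)
  then show ?thesis using eg by simp
qed

lemma f_root_unique:
  assumes n: "n \<ge> 1"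
  shows "\<exists>!s. s > 0 \<and> PS (cK n) s = 0"
proof -
  have f0: "PS (cK n) 0 = 1" by (simp add: PS_zero cK_0)
  have "PS (cK n) (2 * real n) \<le> 1 - 2 * real n / real n" using f_upper[OF n, of "2 * real n"] by simp
  also have "\<dots> = -1" using n by simp
  finally have f2: "PS (cK n) (2 * real n) \<le> 0" by simp
  obtain x where x: "0 \<le> x" "x \<le> 2 * real n" "PS (cK n) x = 0"
    using IVT2[of "PS (cK n)" "2 * real n" 0 0] f2 f0 n PS_isCont[OF allsum_cK[OF n]] by auto
  have "x \<noteq> 0" using x f0 by auto
  with x have ex: "x > 0 \<and> PS (cK n) x = 0" by auto
  show ?thesis
  proof (rule ex1I[where a=x])
    show "x > 0 \<and> PS (cK n) x = 0" using ex .
  next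
    fix y assume y: "y > 0 \<and> PS (cK n) y = 0"
    show "y = x"
    proof (rule ccontr)
      assume "y \<noteq> x"
      then have "y < x \<or> x < y" by auto
      then show False using f_decr[OF n, of y x] f_decr[OF n, of x y] x y by auto
    qed
  qed
qed


lemma ode_unique:
  fixes W Wd Wdd :: "real \<Rightarrow> real" and R :: real
  assumes n: "n \<ge> 1" and R: "R > 0"
    and d1: "\<forall>r\<in>{0..<R}. (W has_real_derivative Wd r) (at r within {0..<R})"
    and d2: "\<forall>r\<in>{0..<R}. (Wd has_real_derivative Wdd r) (at r within {0..<R})"
    and ode: "\<forall>r\<in>{0<..<R}. Wdd r + ((real n - 1) / r - r / 2) * Wd r + W r / 2 = 0"
    and W0: "W 0 = 0" and Wd0: "Wd 0 = 0"
    and b: "0 \<le> b" "b < R"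
  shows "W b = 0"
proof -
  define G where "G r = (Wd r ^ 2 / 2 + W r ^ 2 / 4) * exp (- R * r)" for r
  have cW: "continuous_on {0..<R} W" using d1 by (intro DERIV_continuous_on) auto
  have cWd: "continuous_on {0..<R} Wd" using d2 by (intro DERIV_continuous_on) auto
  have cG: "continuous_on {0..b} G"
  proof -
    have "continuous_on {0..<R} G" unfolding G_def
      by (intro continuous_intros cW cWd) auto
    then show ?thesis by (rule continuous_on_subset) (use b in auto)
  qed
  have dG: "\<exists>y. DERIV G x :> y \<and> y \<le> 0" if x: "0 < x" "x < b" for x
  proof -
    have xi: "x \<in> interior {0..<R}" using x b by auto
    have xr: "x \<in> {0..<R}" using x b by auto
    have a1: "(W has_real_derivative Wd x) (at x)"
      using d1 xr at_within_interior[OF xi] by metis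
    have a2: "(Wd has_real_derivative Wdd x) (at x)"
      using d2 xr at_within_interior[OF xi] by metis
    define y where "y = (Wd x * Wdd x + W x * Wd x / 2) * exp (- R * x)
        + (Wd x ^ 2 / 2 + W x ^ 2 / 4) * (exp (- R * x) * (- R))"
    have "DERIV G x :> y" unfolding G_def[abs_def] y_def
      by (rule derivative_eq_intros a1 a2 refl | simp)+
    moreover have "y \<le> 0"
    proof -
      have e: "Wdd x = - ((real n - 1) / x - x / 2) * Wd x - W x / 2"
        using ode x b by (auto simp: algebra_simps)
      have "y = exp (- R * x) * (- ((real n - 1) / x) * Wd x ^ 2 + (x / 2 - R / 2) * Wd x ^ 2 - R * W x ^ 2 / 4)"
        unfolding y_def e by (simp add: algebra_simps power2_eq_square)
      moreover have "- ((real n - 1) / x) * Wd x ^ 2 \<le> 0" using n x by simp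
      moreover have "(x / 2 - R / 2) * Wd x ^ 2 \<le> 0" using x b
        by (intro mult_nonpos_nonneg) auto
      moreover have "R * W x ^ 2 / 4 \<ge> 0" using R by simp
      ultimately show ?thesis by (simp add: mult_nonneg_nonpos)
    qed
    ultimately show ?thesis by blast
  qed
  have "G b \<le> G 0" by (rule DERIV_nonpos_imp_decreasing_open[OF b(1) dG cG]) auto
  also have "G 0 = 0" by (simp add: G_def W0 Wd0)
  finally have "G b \<le> 0" .
  then have "Wd b ^ 2 / 2 + W b ^ 2 / 4 \<le> 0" unfolding G_def
    by (simp add: mult_le_0_iff)
  then have "W b ^ 2 \<le> 0" using zero_le_power2[of "Wd b"] by linarith
  then show ?thesis by simp
qed


lemma sq4_deriv: "((\<lambda>r::real. r ^ 2 / 4) has_real_derivative r / 2) (at r within S)"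
  by (rule derivative_eq_intros refl | simp)+

lemma V_deriv:
  assumes "allsum c"
  shows "((\<lambda>r. PS c (r ^ 2 / 4)) has_real_derivative PS (diffs c) (r ^ 2 / 4) * (r / 2)) (at r within S)"
  using PS_chain[OF assms sq4_deriv] .

lemma V1_deriv:
  assumes "allsum c"
  shows "((\<lambda>r. PS (diffs c) (r ^ 2 / 4) * (r / 2)) has_real_derivative
     PS (diffs (diffs c)) (r ^ 2 / 4) * (r / 2) * (r / 2) + PS (diffs c) (r ^ 2 / 4) * (1 / 2)) (at r within S)"
proof -
  have a: "allsum (diffs c)" using allsum_diffs[OF assms] .
  have h: "((\<lambda>r::real. r / 2) has_real_derivative 1 / 2) (at r within S)"
    by (rule derivative_eq_intros refl | simp)+
  show ?thesis using DERIV_mult[OF V_deriv[OF a] h] by simp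
qed

lemma PS_cont_on:
  assumes "allsum c" "continuous_on S g"
  shows "continuous_on S (\<lambda>x. PS c (g x))"
proof -
  have "continuous_on UNIV (PS c)"
    using PS_isCont[OF assms(1)] by (intro continuous_at_imp_continuous_on) auto
  then show ?thesis using continuous_on_compose2[OF _ assms(2)] by blast
qed

lemma alg_ode:
  fixes A B C m r :: real
  assumes "r \<noteq> 0"
  shows "(A * (r / 2) * (r / 2) + B * (1 / 2)) + ((m - 1) / r - r / 2) * (B * (r / 2)) + C / 2
       = r ^ 2 / 4 * A + (m / 2 - r ^ 2 / 4) * B + C / 2"
  using assms by (simp add: field_simps power2_eq_square)

lemma V_ode:
  assumes n: "n \<ge> 1" and r: "r \<noteq> 0"
  shows "(PS (diffs (diffs (cK n))) (r ^ 2 / 4) * (r / 2) * (r / 2) + PS (diffs (cK n)) (r ^ 2 / 4) * (1 / 2))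
     + ((real n - 1) / r - r / 2) * (PS (diffs (cK n)) (r ^ 2 / 4) * (r / 2)) + PS (cK n) (r ^ 2 / 4) / 2 = 0"
  unfolding alg_ode[OF r] using kummer_ode[OF n] .


lemma existence:
  assumes n: "n \<ge> 1" and s0: "s0 > 0" "PS (cK n) s0 = 0"
    and l0: "l0 = 1 / (- sqrt (s0 / 2) * PS (diffs (cK n)) s0)"
    and R0: "R0 = 2 * sqrt s0"
  shows "profile_sol n l0 R0 (\<lambda>r. l0 * PS (cK n) (r ^ 2 / 4))"
proof -
  define c where "c = cK n"
  have ac: "allsum c" using allsum_cK[OF n] by (simp add: c_def)
  have ad: "allsum (diffs c)" using allsum_diffs[OF ac] .
  have ad2: "allsum (diffs (diffs c))" using allsum_diffs[OF ad] .
  have dneg: "PS (diffs c) s0 < 0" using fd_neg[OF n] s0 by (simp add: c_def)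
  have sq: "sqrt (s0 / 2) > 0" using s0 by simp
  have "- sqrt (s0 / 2) * PS (diffs c) s0 > 0" using dneg sq by (simp add: mult_pos_neg)
  then have l0pos: "l0 > 0" unfolding l0 by (simp add: c_def)
  have R0pos: "R0 > 0" using R0 s0 by simp
  have R0sq: "R0 ^ 2 / 4 = s0" using R0 s0 by (simp add: power_mult_distrib)
  have nonneg: "\<forall>r\<in>{0..R0}. l0 * PS c (r ^ 2 / 4) \<ge> 0"
  proof
    fix r assume r: "r \<in> {0..R0}"
    have "r ^ 2 \<le> R0 ^ 2" using r by (intro power_mono) auto
    then have le: "r ^ 2 / 4 \<le> s0" using R0sq by simp
    have "PS c (r ^ 2 / 4) \<ge> 0"
    proof (cases "r ^ 2 / 4 = s0")
      case True then show ?thesis using s0 by (simp add: c_def)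
    next
      case False
      then have "r ^ 2 / 4 < s0" using le by simp
      then have "PS c s0 < PS c (r ^ 2 / 4)" using f_decr[OF n, of "r ^ 2 / 4" s0] by (simp add: c_def)
      then show ?thesis using s0 by (simp add: c_def)
    qed
    then show "l0 * PS c (r ^ 2 / 4) \<ge> 0" using l0pos by simp
  qed
  have cont: "continuous_on {0..R0} (\<lambda>r. l0 * PS c (r ^ 2 / 4))"
    by (intro continuous_intros PS_cont_on[OF ac]) auto
  define U1 where "U1 r = l0 * (PS (diffs c) (r ^ 2 / 4) * (r / 2))" for r
  define U2 where "U2 r = l0 * (PS (diffs (diffs c)) (r ^ 2 / 4) * (r / 2) * (r / 2) + PS (diffs c) (r ^ 2 / 4) * (1 / 2))" for r
  have d1: "((\<lambda>r. l0 * PS c (r ^ 2 / 4)) has_real_derivative U1 r) (at r within S)" for r S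
    unfolding U1_def by (intro DERIV_cmult V_deriv ac)
  have d2: "(U1 has_real_derivative U2 r) (at r within S)" for r S
    unfolding U1_def[abs_def] U2_def by (intro DERIV_cmult V1_deriv ac)
  have c2: "continuous_on {0..<R0} U2" unfolding U2_def[abs_def]
    by (intro continuous_intros PS_cont_on[OF ad] PS_cont_on[OF ad2]) auto
  have ode: "\<forall>r\<in>{0<..<R0}. U2 r + ((real n - 1) / r - r / 2) * U1 r + l0 * PS c (r ^ 2 / 4) / 2 = 0"
  proof
    fix r :: real assume "r \<in> {0<..<R0}"
    then have r: "r \<noteq> 0" by auto
    have "U2 r + ((real n - 1) / r - r / 2) * U1 r + l0 * PS c (r ^ 2 / 4) / 2
      = l0 * ((PS (diffs (diffs (cK n))) (r ^ 2 / 4) * (r / 2) * (r / 2) + PS (diffs (cK n)) (r ^ 2 / 4) * (1 / 2))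
     + ((real n - 1) / r - r / 2) * (PS (diffs (cK n)) (r ^ 2 / 4) * (r / 2)) + PS (cK n) (r ^ 2 / 4) / 2)"
      unfolding U1_def U2_def c_def by (simp add: algebra_simps)
    also have "\<dots> = 0" using V_ode[OF n r] by simp
    finally show "U2 r + ((real n - 1) / r - r / 2) * U1 r + l0 * PS c (r ^ 2 / 4) / 2 = 0" .
  qed
  have U10: "U1 0 = 0" by (simp add: U1_def)
  have U0: "l0 * PS c (0 ^ 2 / 4) = l0" by (simp add: PS_zero c_def cK_0)
  have UR: "l0 * PS c (R0 ^ 2 / 4) = 0" using R0sq s0 by (simp add: c_def)
  have dR: "((\<lambda>r. l0 * PS c (r ^ 2 / 4)) has_real_derivative (- sqrt 2)) (at_left R0)"
  proof -
    have "U1 R0 = - sqrt 2"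
    proof -
      have "U1 R0 = l0 * PS (diffs c) s0 * sqrt s0" unfolding U1_def R0sq by (simp add: R0)
      also have "\<dots> = sqrt s0 / (- sqrt (s0 / 2))" unfolding l0 using dneg sq
        by (simp add: c_def field_simps)
      also have "\<dots> = - sqrt 2" using s0 by (simp add: real_sqrt_divide field_simps)
      finally show ?thesis .
    qed
    then show ?thesis using d1[of R0 "{..<R0}"] by simp
  qed
  show ?thesis unfolding profile_sol_def
    using l0pos R0pos nonneg cont ode U10 U0 UR dR d1 d2 c2 unfolding c_def
    by blast
qed


lemma uniqueness:
  assumes n: "n \<ge> 1" and s0: "s0 > 0" "PS (cK n) s0 = 0"
    and uniq: "\<And>s. s > 0 \<Longrightarrow> PS (cK n) s = 0 \<Longrightarrow> s = s0"
    and l0: "l0 = 1 / (- sqrt (s0 / 2) * PS (diffs (cK n)) s0)"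
    and R0: "R0 = 2 * sqrt s0"
    and sol: "profile_sol n l R U"
  shows "l = l0 \<and> R = R0 \<and> (\<forall>r\<in>{0..R}. U r = l0 * PS (cK n) (r ^ 2 / 4))"
proof -
  define c where "c = cK n"
  have ac: "allsum c" using allsum_cK[OF n] by (simp add: c_def)
  have ad: "allsum (diffs c)" using allsum_diffs[OF ac] .
  have ad2: "allsum (diffs (diffs c))" using allsum_diffs[OF ad] .
  have dneg: "PS (diffs c) s0 < 0" using fd_neg[OF n] s0 by (simp add: c_def)
  from sol have lpos: "l > 0" and Rpos: "R > 0" and cU: "continuous_on {0..R} U"
    and U0: "U 0 = l" and UR: "U R = 0" and dUR: "(U has_real_derivative (- sqrt 2)) (at_left R)"
    unfolding profile_sol_def by auto
  from sol obtain U1 U2 where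
    d1: "\<forall>r\<in>{0..<R}. (U has_real_derivative U1 r) (at r within {0..<R})" and
    d2: "\<forall>r\<in>{0..<R}. (U1 has_real_derivative U2 r) (at r within {0..<R})" and
    ode: "\<forall>r\<in>{0<..<R}. U2 r + ((real n - 1) / r - r / 2) * U1 r + U r / 2 = 0" and
    U10: "U1 0 = 0"
    unfolding profile_sol_def by blast
  define V where "V r = PS c (r ^ 2 / 4)" for r
  define V1 where "V1 r = PS (diffs c) (r ^ 2 / 4) * (r / 2)" for r
  define V2 where "V2 r = PS (diffs (diffs c)) (r ^ 2 / 4) * (r / 2) * (r / 2) + PS (diffs c) (r ^ 2 / 4) * (1 / 2)" for r
  have dV: "(V has_real_derivative V1 r) (at r within S)" for r S
    unfolding V_def[abs_def] V1_def using V_deriv[OF ac] .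
  have dV1: "(V1 has_real_derivative V2 r) (at r within S)" for r S
    unfolding V1_def[abs_def] V2_def using V1_deriv[OF ac] .
  have odeV: "V2 r + ((real n - 1) / r - r / 2) * V1 r + V r / 2 = 0" if "r \<noteq> 0" for r
    unfolding V_def V1_def V2_def c_def using V_ode[OF n that] .
  have V0: "V 0 = 1" by (simp add: V_def PS_zero c_def cK_0)
  have eq: "U b = l * V b" if b: "0 \<le> b" "b < R" for b
  proof -
    have "(\<lambda>r. U r - l * V r) b = 0"
    proof (rule ode_unique[OF n Rpos, where W = "\<lambda>r. U r - l * V r" and Wd = "\<lambda>r. U1 r - l * V1 r" and Wdd = "\<lambda>r. U2 r - l * V2 r"])
      show "\<forall>r\<in>{0..<R}. ((\<lambda>r. U r - l * V r) has_real_derivative U1 r - l * V1 r) (at r within {0..<R})"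
        using d1 dV by (auto intro!: DERIV_diff DERIV_cmult)
      show "\<forall>r\<in>{0..<R}. ((\<lambda>r. U1 r - l * V1 r) has_real_derivative U2 r - l * V2 r) (at r within {0..<R})"
        using d2 dV1 by (auto intro!: DERIV_diff DERIV_cmult)
      show "\<forall>r\<in>{0<..<R}. U2 r - l * V2 r + ((real n - 1) / r - r / 2) * (U1 r - l * V1 r) + (U r - l * V r) / 2 = 0"
      proof
        fix r assume r: "r \<in> {0<..<R}"
        have gen: "\<And>A B C D E F q :: real. A - l*B + q*(C - l*D) + (E - l*F)/2 = (A + q*C + E/2) - l*(B + q*D + F/2)"
          by (simp add: field_simps)
        have a: "U2 r + ((real n - 1) / r - r / 2) * U1 r + U r / 2 = 0" using ode r by auto
        have b: "V2 r + ((real n - 1) / r - r / 2) * V1 r + V r / 2 = 0" using odeV r by auto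
        have "U2 r - l * V2 r + ((real n - 1) / r - r / 2) * (U1 r - l * V1 r) + (U r - l * V r) / 2
          = (U2 r + ((real n - 1) / r - r / 2) * U1 r + U r / 2) - l * (V2 r + ((real n - 1) / r - r / 2) * V1 r + V r / 2)"
          using gen[of "U2 r" "V2 r" "(real n - 1) / r - r / 2" "U1 r" "V1 r" "U r" "V r"] .
        then show "U2 r - l * V2 r + ((real n - 1) / r - r / 2) * (U1 r - l * V1 r) + (U r - l * V r) / 2 = 0"
          using a b by simp
      qed
      show "U 0 - l * V 0 = 0" using U0 V0 by simp
      show "U1 0 - l * V1 0 = 0" using U10 by (simp add: V1_def)
    qed (use b in auto)
    then show ?thesis by simp
  qed
  have cV: "isCont V x" for x
    using dV[of x UNIV] DERIV_isCont by blast
  have ev: "eventually (\<lambda>x. U x = l * V x) (at_left R)"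
    using eventually_at_left_real[OF Rpos] by eventually_elim (auto intro: eq)
  have t1: "(U \<longlongrightarrow> U R) (at_left R)"
    using cU Rpos unfolding continuous_on_def by (metis atLeastAtMost_iff at_within_Icc_at_left less_imp_le order_refl)
  have t2: "((\<lambda>x. l * V x) \<longlongrightarrow> l * V R) (at_left R)"
    using cV[of R] by (intro tendsto_intros) (simp add: isCont_def filterlim_at_split)
  have t3: "(U \<longlongrightarrow> l * V R) (at_left R)" using tendsto_cong[OF ev] t2 by simp
  have "U R = l * V R" using tendsto_unique[OF _ t1 t3] by simp
  then have "PS c (R ^ 2 / 4) = 0" using UR lpos by (simp add: V_def)
  moreover have "R ^ 2 / 4 > 0" using Rpos by simp
  ultimately have Rs: "R ^ 2 / 4 = s0" using uniq[of "R ^ 2 / 4"] by (simp add: c_def)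
  have RR0: "R = R0"
  proof -
    have "R ^ 2 = 4 * s0" using Rs by simp
    then have "sqrt (R ^ 2) = sqrt (4 * s0)" by simp
    moreover have "sqrt (R ^ 2) = R" using Rpos by simp
    moreover have "sqrt (4 * s0) = 2 * sqrt s0" by (simp add: real_sqrt_mult)
    ultimately show ?thesis unfolding R0 by simp
  qed
  have eqR: "U x = l * V x" if "x \<in> {0..R}" for x
    using that eq UR \<open>U R = l * V R\<close> by (cases "x = R") auto
  have "((\<lambda>x. l * V x) has_real_derivative (- sqrt 2)) (at_left R)"
  proof -
    have "eventually (\<lambda>x. U x = l * V x) (at_left R)" using ev .
    then show ?thesis using dUR has_field_derivative_cong_eventually[of U "\<lambda>x. l * V x" R "{..<R}"]
      \<open>U R = l * V R\<close> by simp
  qed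
  moreover have "((\<lambda>x. l * V x) has_real_derivative l * V1 R) (at_left R)"
    using dV by (intro DERIV_cmult)
  ultimately have "- sqrt 2 = l * V1 R"
    unfolding has_field_derivative_iff using tendsto_unique by (metis trivial_limit_at_left_real)
  then have "- sqrt 2 = l * (PS (diffs c) s0 * sqrt s0)" using Rs RR0 R0 by (simp add: V1_def)
  then have ll: "l = - sqrt 2 / (PS (diffs c) s0 * sqrt s0)" using dneg s0 by (simp add: field_simps)
  have "l = l0" unfolding ll l0 using dneg s0 by (simp add: c_def real_sqrt_divide field_simps)
  then show ?thesis using RR0 eqR by (simp add: V_def c_def)
qed


theorem lemma6p8:
  fixes n :: nat
  assumes "n \<ge> 1"
  shows "(\<exists>!s. s > 0 \<and> kummerM (-1/2) (real n / 2) s = 0) \<and>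
    (let s\<^sub>0 = (THE s. s > 0 \<and> kummerM (-1/2) (real n / 2) s = 0);
         l\<^sub>0 = 1 / (- sqrt (s\<^sub>0 / 2) * deriv (\<lambda>s. kummerM (-1/2) (real n / 2) s) s\<^sub>0);
         R\<^sub>0 = 2 * sqrt s\<^sub>0;
         U\<^sub>0 = (\<lambda>r. l\<^sub>0 * kummerM (-1/2) (real n / 2) (r\<^sup>2 / 4))
     in profile_sol n l\<^sub>0 R\<^sub>0 U\<^sub>0 \<and>
        (\<forall>l R U. profile_sol n l R U \<longrightarrow>
           l = l\<^sub>0 \<and> R = R\<^sub>0 \<and> (\<forall>r\<in>{0..R}. U r = U\<^sub>0 r)))"
proof -
  have kf: "kummerM (-1/2) (real n / 2) = PS (cK n)" by (rule ext) (rule kM_PS)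
  have ex1: "\<exists>!s. s > 0 \<and> PS (cK n) s = 0" using f_root_unique[OF assms] .
  define s0 where "s0 = (THE s. s > 0 \<and> PS (cK n) s = 0)"
  have s0: "s0 > 0" "PS (cK n) s0 = 0" using theI'[OF ex1] unfolding s0_def by auto
  have uniq: "\<And>s. s > 0 \<Longrightarrow> PS (cK n) s = 0 \<Longrightarrow> s = s0"
    using ex1 s0 by blast
  have dv: "deriv (PS (cK n)) s0 = PS (diffs (cK n)) s0"
    using PS_deriv[OF allsum_cK[OF assms]] by (rule DERIV_imp_deriv)
  define l0 where "l0 = 1 / (- sqrt (s0 / 2) * PS (diffs (cK n)) s0)"
  define R0 where "R0 = 2 * sqrt s0"
  have E: "profile_sol n l0 R0 (\<lambda>r. l0 * PS (cK n) (r ^ 2 / 4))"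
    by (rule existence[OF assms s0 l0_def R0_def])
  have U: "\<forall>l R U. profile_sol n l R U \<longrightarrow> l = l0 \<and> R = R0 \<and> (\<forall>r\<in>{0..R}. U r = l0 * PS (cK n) (r ^ 2 / 4))"
    using uniqueness[OF assms s0 uniq l0_def R0_def] by blast
  show ?thesis
    unfolding kf Let_def s0_def[symmetric] dv l0_def[symmetric] R0_def[symmetric]
    using ex1 E U by blast
qed

end
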